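(* Let $P$ be the transition matrix of a reversible and ergodic Markov chain on $V$ with stationary distribution $\pi$ and mixing rate $t^*$. For the billiard router model for $P$, with any initial configuration, $$\left|\chi^{(T)}_w-\mu^{(T)}_w\right|\le\frac{3\pi_w}{\pi_{\min}}\,t^*\,\Delta(\Delta-1)$$ for all $w\in V$ and $T\ge0$.
   Context: Let $V=\{1,\dots,N\}$ and let $P\in\mathbb{R}_{\ge 0}^{N\times N}$ be an ergodic (irreducible, aperiodic) stochastic matrix with stationary distribution $\pi$; $\pi_{\min}=\min_v\pi_v$; reversible means $\pi_uP_{u,v}=\pi_vP_{v,u}$ for all $u,v$. For $v\in V$ let $\mathcal N(v)=\{u: P_{v,u}>0\}$, $\delta(v)=|\mathcal N(v)|$, $\Delta=\max_v\delta(v)$. Total variation distance $d_{TV}(\xi,\zeta)=\frac12\|\xi-\zeta\|_1$; mixing time $\tau(\varepsilon)=\max_{v}\min\{t\ge0: d_{TV}(P^t_{v,\cdot},\pi)\le\varepsilon\}$; mixing rate $t^*=\tau(1/4)$. A functional-router model consists of functions $\sigma_v:\mathbb{Z}_{\ge0}\to\mathcal N(v)$; write $I_{v,u}[z,z')=|\{j\in\{z,\dots,z'-1\}:\sigma_v(j)=u\}|$ (zero if $z'\le z$). Given $\chi^{(0)}\in\mathbb{Z}_{\ge0}^N$, set $Z^{(t)}_{v,u}=I_{v,u}\big[\sum_{s=0}^{t-1}\chi^{(s)}_v,\sum_{s=0}^{t}\chi^{(s)}_v\big)$, $\chi^{(t+1)}_u=\sum_vZ^{(t)}_{v,u}$,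 $\mu^{(0)}=\chi^{(0)}$, $\mu^{(t)}=\mu^{(0)}P^t$. The billiard router is defined recursively: $\sigma_v(i)$ is an element $u\in\mathcal N(v)$ minimizing $(I_{v,u}[0,i)+1)/P_{v,u}$ (ties broken arbitrarily). It is known (billiard sequences) that for this router $|I_{v,u}[z,z')-(z'-z)P_{v,u}|\le 1+(\delta(v)-2)P_{v,u}$ for all $v,u$ and $z'>z\ge0$. *)

theory Defs
  imports "HOL-Analysis.Analysis"
begin

text \<open>State space V = {0..<N}; a matrix is a function nat => nat => real.\<close>

definition stochastic :: "nat \<Rightarrow> (nat \<Rightarrow> nat \<Rightarrow> real) \<Rightarrow> bool" where
  "stochastic N P \<longleftrightarrow> (\<forall>u<N. \<forall>v<N. P u v \<ge> 0) \<and> (\<forall>u<N. (\<Sum>v<N. P u v) = 1)"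

primrec mpow :: "nat \<Rightarrow> (nat \<Rightarrow> nat \<Rightarrow> real) \<Rightarrow> nat \<Rightarrow> nat \<Rightarrow> nat \<Rightarrow> real" where
  "mpow N P 0 u v = (if u = v then 1 else 0)"
| "mpow N P (Suc t) u v = (\<Sum>w<N. mpow N P t u w * P w v)"

definition irreducible_chain :: "nat \<Rightarrow> (nat \<Rightarrow> nat \<Rightarrow> real) \<Rightarrow> bool" where
  "irreducible_chain N P \<longleftrightarrow> (\<forall>u<N. \<forall>v<N. \<exists>t. mpow N P t u v > 0)"

definition aperiodic_chain :: "nat \<Rightarrow> (nat \<Rightarrow> nat \<Rightarrow> real) \<Rightarrow> bool" where
  "aperiodic_chain N P \<longleftrightarrow> (\<forall>v<N. Gcd {t::nat. t \<ge> 1 \<and> mpow N P t v v > 0} = 1)"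

definition ergodic_chain :: "nat \<Rightarrow> (nat \<Rightarrow> nat \<Rightarrow> real) \<Rightarrow> bool" where
  "ergodic_chain N P \<longleftrightarrow> stochastic N P \<and> irreducible_chain N P \<and> aperiodic_chain N P"

definition stationary_dist :: "nat \<Rightarrow> (nat \<Rightarrow> nat \<Rightarrow> real) \<Rightarrow> (nat \<Rightarrow> real) \<Rightarrow> bool" where
  "stationary_dist N P \<pi> \<longleftrightarrow> (\<forall>v<N. \<pi> v \<ge> 0) \<and> (\<Sum>v<N. \<pi> v) = 1 \<and>
     (\<forall>v<N. (\<Sum>u<N. \<pi> u * P u v) = \<pi> v)"

definition reversible_chain :: "nat \<Rightarrow> (nat \<Rightarrow> nat \<Rightarrow> real) \<Rightarrow> (nat \<Rightarrow> real) \<Rightarrow> bool" where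
  "reversible_chain N P \<pi> \<longleftrightarrow> (\<forall>u<N. \<forall>v<N. \<pi> u * P u v = \<pi> v * P v u)"

definition pi_min :: "nat \<Rightarrow> (nat \<Rightarrow> real) \<Rightarrow> real" where
  "pi_min N \<pi> = Min (\<pi> ` {..<N})"

definition nbrs :: "nat \<Rightarrow> (nat \<Rightarrow> nat \<Rightarrow> real) \<Rightarrow> nat \<Rightarrow> nat set" where
  "nbrs N P v = {u. u < N \<and> P v u > 0}"

definition deg :: "nat \<Rightarrow> (nat \<Rightarrow> nat \<Rightarrow> real) \<Rightarrow> nat \<Rightarrow> nat" where
  "deg N P v = card (nbrs N P v)"

definition max_deg :: "nat \<Rightarrow> (nat \<Rightarrow> nat \<Rightarrow> real) \<Rightarrow> nat" where
  "max_deg N P = Max (deg N P ` {..<N})"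

definition dTV :: "nat \<Rightarrow> (nat \<Rightarrow> real) \<Rightarrow> (nat \<Rightarrow> real) \<Rightarrow> real" where
  "dTV N \<xi> \<zeta> = (1/2) * (\<Sum>v<N. \<bar>\<xi> v - \<zeta> v\<bar>)"

definition mixing_time :: "nat \<Rightarrow> (nat \<Rightarrow> nat \<Rightarrow> real) \<Rightarrow> (nat \<Rightarrow> real) \<Rightarrow> real \<Rightarrow> nat" where
  "mixing_time N P \<pi> \<epsilon> =
     Max ((\<lambda>v. LEAST t. dTV N (mpow N P t v) \<pi> \<le> \<epsilon>) ` {..<N})"

definition mixing_rate :: "nat \<Rightarrow> (nat \<Rightarrow> nat \<Rightarrow> real) \<Rightarrow> (nat \<Rightarrow> real) \<Rightarrow> nat" where
  "mixing_rate N P \<pi> = mixing_time N P \<pi> (1/4)"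

text \<open>Functional router: sigma v i is the i-th destination of vertex v.
  I v u [z, z') counts indices j in {z..<z'} with sigma v j = u.\<close>
definition Icount :: "(nat \<Rightarrow> nat \<Rightarrow> nat) \<Rightarrow> nat \<Rightarrow> nat \<Rightarrow> nat \<Rightarrow> nat \<Rightarrow> nat" where
  "Icount \<sigma> v u z z' = card {j. z \<le> j \<and> j < z' \<and> \<sigma> v j = u}"

definition functional_router :: "nat \<Rightarrow> (nat \<Rightarrow> nat \<Rightarrow> real) \<Rightarrow> (nat \<Rightarrow> nat \<Rightarrow> nat) \<Rightarrow> bool" where
  "functional_router N P \<sigma> \<longleftrightarrow> (\<forall>v<N. \<forall>i. \<sigma> v i \<in> nbrs N P v)"

definition billiard_router :: "nat \<Rightarrow> (nat \<Rightarrow> nat \<Rightarrow> real) \<Rightarrow> (nat \<Rightarrow> nat \<Rightarrow> nat) \<Rightarrow> bool" where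
  "billiard_router N P \<sigma> \<longleftrightarrow> functional_router N P \<sigma> \<and>
     (\<forall>v<N. \<forall>i. \<forall>u\<in>nbrs N P v.
        (real (Icount \<sigma> v (\<sigma> v i) 0 i) + 1) / P v (\<sigma> v i)
          \<le> (real (Icount \<sigma> v u 0 i) + 1) / P v u)"

text \<open>Router dynamics. The state at time t is the pair (chi^(t), S^(t)) where
  S^(t) v = sum_{s<t} chi^(s) v.\<close>
primrec router_state :: "nat \<Rightarrow> (nat \<Rightarrow> nat \<Rightarrow> nat) \<Rightarrow> (nat \<Rightarrow> nat) \<Rightarrow> nat
    \<Rightarrow> (nat \<Rightarrow> nat) \<times> (nat \<Rightarrow> nat)" where
  "router_state N \<sigma> \<chi>0 0 = (\<chi>0, (\<lambda>v. 0))"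
| "router_state N \<sigma> \<chi>0 (Suc t) =
     (let c = fst (router_state N \<sigma> \<chi>0 t); S = snd (router_state N \<sigma> \<chi>0 t);
          S' = (\<lambda>v. S v + c v)
      in ((\<lambda>u. \<Sum>v<N. Icount \<sigma> v u (S v) (S' v)), S'))"

definition chi :: "nat \<Rightarrow> (nat \<Rightarrow> nat \<Rightarrow> nat) \<Rightarrow> (nat \<Rightarrow> nat) \<Rightarrow> nat \<Rightarrow> nat \<Rightarrow> nat" where
  "chi N \<sigma> \<chi>0 t = fst (router_state N \<sigma> \<chi>0 t)"

definition mu :: "nat \<Rightarrow> (nat \<Rightarrow> nat \<Rightarrow> real) \<Rightarrow> (nat \<Rightarrow> nat) \<Rightarrow> nat \<Rightarrow> nat \<Rightarrow> real" where
  "mu N P \<chi>0 t w = (\<Sum>v<N. real (\<chi>0 v) * mpow N P t v w)"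

end

theory Submission
  imports Defs
begin


lemma delta_sum: assumes "u < (N::nat)" shows "(\<Sum>w<N. (if u = w then 1 else 0) * (f w::real)) = f u"
proof -
  have "(\<Sum>w<N. (if u = w then 1 else 0) * f w) = (\<Sum>w<N. if u = w then f w else 0)"
    by (intro sum.cong) auto
  also have "\<dots> = f u" using assms by (subst sum.delta') auto
  finally show ?thesis .
qed

lemma delta_sum2: assumes "u < (N::nat)" shows "(\<Sum>w<N. (f w::real) * (if w = u then 1 else 0)) = f u"
proof -
  have "(\<Sum>w<N. f w * (if w = u then 1 else 0)) = (\<Sum>w<N. if w = u then f w else 0)"
    by (intro sum.cong) auto
  also have "\<dots> = f u" using assms by (subst sum.delta) auto
  finally show ?thesis .
qed

lemma mpow_one: "u < N \<Longrightarrow> mpow N P (Suc 0) u v = P u v"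
  by (simp add: delta_sum)

locale mc =
  fixes N :: nat and P :: "nat \<Rightarrow> nat \<Rightarrow> real" and \<pi> :: "nat \<Rightarrow> real"
  assumes erg: "ergodic_chain N P" and stat: "stationary_dist N P \<pi>"
    and rev: "reversible_chain N P \<pi>"
begin

lemma P_nonneg: "u < N \<Longrightarrow> v < N \<Longrightarrow> P u v \<ge> 0"
  using erg unfolding ergodic_chain_def stochastic_def by blast

lemma P_row: "u < N \<Longrightarrow> (\<Sum>v<N. P u v) = 1"
  using erg unfolding ergodic_chain_def stochastic_def by blast

lemma pi_nonneg: "v < N \<Longrightarrow> \<pi> v \<ge> 0"
  using stat unfolding stationary_dist_def by blast

lemma pi_sum: "(\<Sum>v<N. \<pi> v) = 1"
  using stat unfolding stationary_dist_def by blast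

lemma pi_stat: "v < N \<Longrightarrow> (\<Sum>u<N. \<pi> u * P u v) = \<pi> v"
  using stat unfolding stationary_dist_def by blast

lemma P_rev: "u < N \<Longrightarrow> v < N \<Longrightarrow> \<pi> u * P u v = \<pi> v * P v u"
  using rev unfolding reversible_chain_def by blast

lemma mpow_nonneg: "u < N \<Longrightarrow> v < N \<Longrightarrow> mpow N P t u v \<ge> 0"
proof (induction t arbitrary: v)
  case 0 then show ?case by simp
next
  case (Suc t) then show ?case by (auto intro!: sum_nonneg mult_nonneg_nonneg P_nonneg)
qed

lemma mpow_add: "v < N \<Longrightarrow> mpow N P (a + b) u v = (\<Sum>x<N. mpow N P a u x * mpow N P b x v)"
proof (induction b arbitrary: v)
  case 0 then show ?case by (simp add: delta_sum2)
next
  case (Suc b)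
  have "mpow N P (a + Suc b) u v = (\<Sum>w<N. mpow N P (a+b) u w * P w v)" by simp
  also have "\<dots> = (\<Sum>w<N. (\<Sum>x<N. mpow N P a u x * mpow N P b x w) * P w v)"
    by (intro sum.cong refl) (simp add: Suc.IH)
  also have "\<dots> = (\<Sum>w<N. \<Sum>x<N. mpow N P a u x * (mpow N P b x w * P w v))"
    by (simp add: sum_distrib_right mult.assoc)
  also have "\<dots> = (\<Sum>x<N. \<Sum>w<N. mpow N P a u x * (mpow N P b x w * P w v))"
    by (rule sum.swap)
  also have "\<dots> = (\<Sum>x<N. mpow N P a u x * (\<Sum>w<N. mpow N P b x w * P w v))"
    by (simp add: sum_distrib_left)
  finally show ?case by simp
qed

lemma mpow_row: "u < N \<Longrightarrow> (\<Sum>v<N. mpow N P t u v) = 1"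
proof (induction t)
  case 0 then show ?case by simp
next
  case (Suc t)
  have "(\<Sum>v<N. mpow N P (Suc t) u v) = (\<Sum>v<N. \<Sum>w<N. mpow N P t u w * P w v)"
    by simp
  also have "\<dots> = (\<Sum>w<N. \<Sum>v<N. mpow N P t u w * P w v)" by (rule sum.swap)
  also have "\<dots> = (\<Sum>w<N. mpow N P t u w * (\<Sum>v<N. P w v))"
    by (simp add: sum_distrib_left)
  also have "\<dots> = (\<Sum>w<N. mpow N P t u w)" by (intro sum.cong refl) (simp add: P_row)
  finally show ?case using Suc by simp
qed

lemma mpow_le1: "u < N \<Longrightarrow> v < N \<Longrightarrow> mpow N P t u v \<le> 1"
proof -
  assume a: "u < N" "v < N"
  have "mpow N P t u v \<le> (\<Sum>v<N. mpow N P t u v)"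
    by (rule member_le_sum) (use a mpow_nonneg in auto)
  then show ?thesis using mpow_row a by simp
qed

lemma mpow_stat: "v < N \<Longrightarrow> (\<Sum>u<N. \<pi> u * mpow N P t u v) = \<pi> v"
proof (induction t arbitrary: v)
  case 0 then show ?case by (simp add: delta_sum2)
next
  case (Suc t)
  have "(\<Sum>u<N. \<pi> u * mpow N P (Suc t) u v) = (\<Sum>u<N. \<Sum>w<N. \<pi> u * mpow N P t u w * P w v)"
    by (simp add: sum_distrib_left mult.assoc)
  also have "\<dots> = (\<Sum>w<N. \<Sum>u<N. \<pi> u * mpow N P t u w * P w v)" by (rule sum.swap)
  also have "\<dots> = (\<Sum>w<N. (\<Sum>u<N. \<pi> u * mpow N P t u w) * P w v)"
    by (simp add: sum_distrib_right)
  also have "\<dots> = (\<Sum>w<N. \<pi> w * P w v)" by (intro sum.cong refl) (simp add: Suc.IH)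
  finally show ?case using pi_stat Suc by simp
qed

lemma mpow_rev: "u < N \<Longrightarrow> w < N \<Longrightarrow> \<pi> u * mpow N P t u w = \<pi> w * mpow N P t w u"
proof (induction t arbitrary: w)
  case 0 then show ?case by simp
next
  case (Suc t)
  have "\<pi> u * mpow N P (Suc t) u w = (\<Sum>x<N. (\<pi> u * mpow N P t u x) * P x w)"
    by (simp add: sum_distrib_left mult.assoc)
  also have "\<dots> = (\<Sum>x<N. mpow N P t x u * (\<pi> x * P x w))"
    by (intro sum.cong refl) (simp add: Suc.IH Suc.prems)
  also have "\<dots> = (\<Sum>x<N. mpow N P t x u * (\<pi> w * P w x))"
    by (intro sum.cong refl) (simp add: P_rev Suc.prems)
  also have "\<dots> = \<pi> w * (\<Sum>x<N. P w x * mpow N P t x u)"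
    by (simp add: sum_distrib_left mult_ac)
  also have "\<dots> = \<pi> w * (\<Sum>x<N. mpow N P (Suc 0) w x * mpow N P t x u)"
    by (simp only: mpow_one[OF Suc.prems(2)])
  also have "\<dots> = \<pi> w * mpow N P (Suc 0 + t) w u" by (simp only: mpow_add[OF Suc.prems(1)])
  finally show ?case by simp
qed

lemma mpow_pos_add: "u < N \<Longrightarrow> x < N \<Longrightarrow> v < N \<Longrightarrow> mpow N P a u x > 0 \<Longrightarrow> mpow N P b x v > 0
   \<Longrightarrow> mpow N P (a + b) u v > 0"
proof -
  assume a: "u < N" "x < N" "v < N" "mpow N P a u x > 0" "mpow N P b x v > 0"
  have "0 < mpow N P a u x * mpow N P b x v" using a by simp
  also have "\<dots> \<le> (\<Sum>y<N. mpow N P a u y * mpow N P b y v)"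
    by (rule member_le_sum) (use a mpow_nonneg in auto)
  finally show ?thesis using mpow_add a by simp
qed

lemma pi_pos: "v < N \<Longrightarrow> \<pi> v > 0"
proof -
  assume v: "v < N"
  have "\<exists>x<N. \<pi> x > 0"
  proof (rule ccontr)
    assume "\<not> ?thesis"
    then have "\<forall>x<N. \<pi> x \<le> 0" by force
    then have "(\<Sum>v<N. \<pi> v) \<le> 0" by (intro sum_nonpos) auto
    then show False using pi_sum by simp
  qed
  then obtain x where x: "x < N" "\<pi> x > 0" by blast
  obtain t where t: "mpow N P t x v > 0"
    using erg x v unfolding ergodic_chain_def irreducible_chain_def by blast
  have "0 < \<pi> x * mpow N P t x v" using x t by simp
  also have "\<dots> \<le> (\<Sum>u<N. \<pi> u * mpow N P t u v)"
    by (rule member_le_sum) (use x pi_nonneg mpow_nonneg v in auto)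
  finally show ?thesis using mpow_stat v by simp
qed

lemma pi_min_le: "u < N \<Longrightarrow> pi_min N \<pi> \<le> \<pi> u"
  unfolding pi_min_def by (rule Min_le) auto

lemma pi_min_pos: "0 < N \<Longrightarrow> pi_min N \<pi> > 0"
proof -
  assume "0 < N"
  then have "pi_min N \<pi> \<in> \<pi> ` {..<N}" unfolding pi_min_def by (intro Min_in) auto
  then show ?thesis using pi_pos by auto
qed

end


lemma contract:
  fixes M :: "nat \<Rightarrow> nat \<Rightarrow> real" and \<mu> \<rho> :: "nat \<Rightarrow> real"
  assumes M: "\<forall>x<N. \<forall>y<N. M x y \<ge> c * \<rho> y" and Mr: "\<forall>x<N. (\<Sum>y<N. M x y) = 1"
    and mu0: "(\<Sum>x<N. \<mu> x) = 0" and r1: "(\<Sum>y<N. \<rho> y) = 1"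
  shows "(\<Sum>y<N. \<bar>\<Sum>x<N. \<mu> x * M x y\<bar>) \<le> (1 - c) * (\<Sum>x<N. \<bar>\<mu> x\<bar>)"
proof -
  have eq: "(\<Sum>x<N. \<mu> x * M x y) = (\<Sum>x<N. \<mu> x * (M x y - c * \<rho> y))" for y
  proof -
    have "(\<Sum>x<N. \<mu> x * (c * \<rho> y)) = 0" using mu0 by (simp add: sum_distrib_right[symmetric])
    then show ?thesis by (simp add: right_diff_distrib sum_subtractf)
  qed
  have "(\<Sum>y<N. \<bar>\<Sum>x<N. \<mu> x * M x y\<bar>) \<le> (\<Sum>y<N. \<Sum>x<N. \<bar>\<mu> x\<bar> * (M x y - c * \<rho> y))"
  proof (rule sum_mono)
    fix y assume y: "y \<in> {..<N}"
    have "\<bar>\<Sum>x<N. \<mu> x * M x y\<bar> \<le> (\<Sum>x<N. \<bar>\<mu> x * (M x y - c * \<rho> y)\<bar>)"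
      unfolding eq by (rule sum_abs)
    also have "\<dots> = (\<Sum>x<N. \<bar>\<mu> x\<bar> * (M x y - c * \<rho> y))"
      using M y by (intro sum.cong refl) (auto simp: abs_mult)
    finally show "\<bar>\<Sum>x<N. \<mu> x * M x y\<bar> \<le> (\<Sum>x<N. \<bar>\<mu> x\<bar> * (M x y - c * \<rho> y))" .
  qed
  also have "\<dots> = (\<Sum>x<N. \<Sum>y<N. \<bar>\<mu> x\<bar> * (M x y - c * \<rho> y))" by (rule sum.swap)
  also have "\<dots> = (\<Sum>x<N. \<bar>\<mu> x\<bar> * ((\<Sum>y<N. M x y) - c * (\<Sum>y<N. \<rho> y)))"
    by (simp add: sum_distrib_left sum_subtractf right_diff_distrib)
  also have "\<dots> = (\<Sum>x<N. \<bar>\<mu> x\<bar> * (1 - c))" using Mr r1 by (intro sum.cong refl) simp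
  also have "\<dots> = (1 - c) * (\<Sum>x<N. \<bar>\<mu> x\<bar>)" by (metis sum_distrib_right mult.commute)
  finally show ?thesis .
qed

context mc begin

definition err :: "nat \<Rightarrow> nat \<Rightarrow> nat \<Rightarrow> real" where
  "err w t u = mpow N P t w u - \<pi> u"

definition dd :: "nat \<Rightarrow> nat \<Rightarrow> real" where
  "dd w t = (\<Sum>y<N. \<bar>err w t y\<bar>)"

lemma dTV_dd: "dTV N (mpow N P t w) \<pi> = dd w t / 2"
  unfolding dTV_def dd_def err_def by simp

lemma err_sum: "w < N \<Longrightarrow> (\<Sum>u<N. err w t u) = 0"
  unfolding err_def by (simp add: sum_subtractf mpow_row pi_sum)

lemma err_add: "y < N \<Longrightarrow> err w (t + s) y = (\<Sum>x<N. err w t x * mpow N P s x y)"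
  unfolding err_def
  by (simp add: left_diff_distrib sum_subtractf mpow_add mpow_stat)

lemma err_Suc: "y < N \<Longrightarrow> err w (Suc t) y = (\<Sum>x<N. err w t x * P x y)"
  unfolding err_def by (simp add: left_diff_distrib sum_subtractf pi_stat)

lemma dd_le2: "w < N \<Longrightarrow> dd w t \<le> 2"
proof -
  assume w: "w < N"
  have "dd w t \<le> (\<Sum>y<N. mpow N P t w y + \<pi> y)"
    unfolding dd_def err_def
    by (rule sum_mono) (use w mpow_nonneg pi_nonneg in \<open>auto simp: abs_le_iff\<close>)
  also have "\<dots> = 2" using w by (simp add: sum.distrib mpow_row pi_sum)
  finally show ?thesis .
qed

lemma dd_nonneg: "dd w t \<ge> 0"
  unfolding dd_def by (rule sum_nonneg) auto

lemma dd_Suc: "w < N \<Longrightarrow> dd w (Suc t) \<le> dd w t"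
proof -
  assume w: "w < N"
  have "dd w (Suc t) = (\<Sum>y<N. \<bar>\<Sum>x<N. err w t x * P x y\<bar>)"
    unfolding dd_def by (intro sum.cong refl) (simp add: err_Suc)
  also have "\<dots> \<le> (1 - 0) * (\<Sum>x<N. \<bar>err w t x\<bar>)"
    by (rule contract[where \<rho> = \<pi>]) (use P_nonneg P_row err_sum w pi_sum in auto)
  finally show ?thesis by (simp add: dd_def)
qed

lemma dd_mono: "w < N \<Longrightarrow> t \<le> t' \<Longrightarrow> dd w t' \<le> dd w t"
  by (rule lift_Suc_antimono_le[where f = "dd w"]) (auto simp: dd_Suc)

lemma dd_submult:
  assumes w: "w < N" and a: "\<forall>x<N. dd x t \<le> a"
  shows "dd w (s + t) \<le> a * dd w s"
proof -
  have eq: "err w (s + t) y = (\<Sum>x<N. err w s x * err x t y)" if y: "y < N" for y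
  proof -
    have z: "(\<Sum>x<N. err w s x * \<pi> y) = 0" using err_sum[OF w] by (simp add: sum_distrib_right[symmetric])
    have "(\<Sum>x<N. err w s x * err x t y) = (\<Sum>x<N. err w s x * mpow N P t x y) - (\<Sum>x<N. err w s x * \<pi> y)"
      by (simp add: err_def[where t=t and u=y] right_diff_distrib sum_subtractf)
    then show ?thesis using z err_add[OF y, of w s t] by simp
  qed
  have "dd w (s + t) \<le> (\<Sum>y<N. \<Sum>x<N. \<bar>err w s x\<bar> * \<bar>err x t y\<bar>)"
    unfolding dd_def
  proof (rule sum_mono)
    fix y assume "y \<in> {..<N}"
    then show "\<bar>err w (s + t) y\<bar> \<le> (\<Sum>x<N. \<bar>err w s x\<bar> * \<bar>err x t y\<bar>)"
      using eq sum_abs[of "\<lambda>x. err w s x * err x t y" "{..<N}"] by (simp add: abs_mult)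
  qed
  also have "\<dots> = (\<Sum>x<N. \<bar>err w s x\<bar> * dd x t)"
    by (subst sum.swap) (simp add: dd_def sum_distrib_left)
  also have "\<dots> \<le> (\<Sum>x<N. \<bar>err w s x\<bar> * a)"
    using a by (intro sum_mono mult_left_mono) auto
  also have "\<dots> = a * dd w s" unfolding dd_def by (metis sum_distrib_right mult.commute)
  finally show ?thesis .
qed

lemma ex_odd: assumes x: "x < N" shows "\<exists>q. odd q \<and> mpow N P q x x > 0"
proof (rule ccontr)
  assume "\<not> ?thesis"
  then have "\<forall>t\<in>{t::nat. t \<ge> 1 \<and> mpow N P t x x > 0}. 2 dvd t" by auto
  then have "(2::nat) dvd Gcd {t::nat. t \<ge> 1 \<and> mpow N P t x x > 0}"
    by (intro Gcd_greatest) auto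
  moreover have "Gcd {t::nat. t \<ge> 1 \<and> mpow N P t x x > 0} = 1"
    using erg x unfolding ergodic_chain_def aperiodic_chain_def by blast
  ultimately show False by simp
qed

lemma two_pos: assumes x: "x < N" shows "mpow N P 2 x x > 0"
proof -
  have "\<exists>y<N. P x y > 0"
  proof (rule ccontr)
    assume "\<not> ?thesis"
    then have "(\<Sum>y<N. P x y) \<le> 0" by (intro sum_nonpos) auto
    then show False using P_row x by simp
  qed
  then obtain y where y: "y < N" "P x y > 0" by blast
  have "\<pi> x * P x y > 0" using pi_pos[OF x] y by simp
  then have "\<pi> y * P y x > 0" using P_rev[OF x y(1)] by simp
  then have "P y x > 0" using pi_pos[OF y(1)] by (simp add: zero_less_mult_iff)
  have "mpow N P (Suc 0 + Suc 0) x x > 0"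
    by (rule mpow_pos_add[OF x y(1) x]) (use y \<open>P y x > 0\<close> x mpow_one in auto)
  then show ?thesis by (simp add: numeral_2_eq_2)
qed

lemma even_pos: assumes x: "x < N" shows "mpow N P (2 * Suc k) x x > 0"
proof (induction k)
  case 0 then show ?case using two_pos[OF x] by simp
next
  case (Suc k)
  have "mpow N P (2 * Suc k + 2) x x > 0" by (rule mpow_pos_add[OF x x x Suc two_pos[OF x]])
  then show ?case by (simp add: algebra_simps)
qed

lemma large_pos: assumes x: "x < N" shows "\<exists>q. \<forall>m\<ge>q. mpow N P m x x > 0"
proof -
  obtain q where q: "odd q" "mpow N P q x x > 0" using ex_odd[OF x] by blast
  have oddk: "mpow N P (q + 2 * k) x x > 0" for k
  proof (induction k)
    case 0 then show ?case using q by simp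
  next
    case (Suc k)
    have "mpow N P (q + 2 * k + 2) x x > 0" by (rule mpow_pos_add[OF x x x Suc two_pos[OF x]])
    then show ?case by (simp add: algebra_simps)
  qed
  have "mpow N P m x x > 0" if m: "m \<ge> q" for m
  proof (cases "even m")
    case True
    then obtain k where k: "m = 2 * k" by blast
    with m q have "k \<ge> 1" by (cases k) auto
    then obtain j where "k = Suc j" by (cases k) auto
    then show ?thesis using k even_pos[OF x] by simp
  next
    case False
    then have "even (m - q)" using q m by simp
    then obtain k where "m - q = 2 * k" by blast
    then have "m = q + 2 * k" using m by simp
    then show ?thesis using oddk by simp
  qed
  then show ?thesis by blast
qed

lemma all_pos: "\<exists>R. \<forall>u<N. \<forall>v<N. mpow N P R u v > 0"
proof -
  have "\<forall>u. \<exists>q. u < N \<longrightarrow> (\<forall>m\<ge>q. mpow N P m u u > 0)" using large_pos by blast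
  then obtain Q where Q: "\<And>u m. u < N \<Longrightarrow> m \<ge> Q u \<Longrightarrow> mpow N P m u u > 0"
    by (metis choice)
  have "\<forall>p. \<exists>t. fst p < N \<longrightarrow> snd p < N \<longrightarrow> mpow N P t (fst p) (snd p) > 0"
    using erg unfolding ergodic_chain_def irreducible_chain_def by blast
  then obtain T where T: "\<And>u v. u < N \<Longrightarrow> v < N \<Longrightarrow> mpow N P (T (u, v)) u v > 0"
    by (metis choice fst_conv snd_conv)
  define R where "R = (\<Sum>u<N. Q u) + (\<Sum>u<N. \<Sum>v<N. T (u, v))"
  have "mpow N P R u v > 0" if u: "u < N" and v: "v < N" for u v
  proof -
    have "Q u \<le> (\<Sum>u<N. Q u)" by (rule member_le_sum) (use u in auto)
    moreover have "T (u, v) \<le> (\<Sum>v<N. T (u, v))" by (rule member_le_sum) (use v in auto)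
    moreover have "(\<Sum>v<N. T (u, v)) \<le> (\<Sum>u<N. \<Sum>v<N. T (u, v))"
      by (rule member_le_sum[where f = "\<lambda>u. \<Sum>v<N. T (u, v)"]) (use u in auto)
    ultimately have le: "Q u \<le> R - T (u, v)" "T (u, v) \<le> R" unfolding R_def by linarith+
    have "mpow N P ((R - T (u, v)) + T (u, v)) u v > 0"
      by (rule mpow_pos_add[OF u u v Q[OF u le(1)] T[OF u v]])
    then show ?thesis using le by simp
  qed
  then show ?thesis by blast
qed

lemma pi_le1: "v < N \<Longrightarrow> \<pi> v \<le> 1"
proof -
  assume v: "v < N"
  have "\<pi> v \<le> (\<Sum>v<N. \<pi> v)" by (rule member_le_sum) (use v pi_nonneg in auto)
  then show ?thesis using pi_sum by simp
qed

lemma converge: assumes w: "w < N" shows "\<exists>t. dTV N (mpow N P t w) \<pi> \<le> 1/4"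
proof -
  obtain R where R: "\<And>u v. u < N \<Longrightarrow> v < N \<Longrightarrow> mpow N P R u v > 0" using all_pos by blast
  define S where "S = (\<lambda>p. mpow N P R (fst p) (snd p)) ` ({..<N} \<times> {..<N})"
  define \<epsilon> where "\<epsilon> = Min S"
  have finS: "finite S" "S \<noteq> {}" unfolding S_def using w by auto
  have epos: "\<epsilon> > 0" unfolding \<epsilon>_def using Min_in[OF finS] R unfolding S_def by auto
  have ele: "\<epsilon> \<le> mpow N P R u v" if "u < N" "v < N" for u v
    unfolding \<epsilon>_def S_def by (rule Min_le) (use that in force)+
  have e1: "\<epsilon> \<le> 1" using ele[OF w w] mpow_le1[OF w w, of R] by simp
  have Mb: "\<forall>x<N. \<forall>y<N. mpow N P R x y \<ge> \<epsilon> * \<pi> y"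
  proof (intro allI impI)
    fix x y assume "x < N" "y < N"
    then have "\<epsilon> * \<pi> y \<le> \<epsilon> * 1" using pi_le1 epos by (intro mult_left_mono) auto
    then show "mpow N P R x y \<ge> \<epsilon> * \<pi> y" using ele[OF \<open>x<N\<close> \<open>y<N\<close>] by simp
  qed
  have dk: "dd w (k * R) \<le> (1 - \<epsilon>) ^ k * 2" for k
  proof (induction k)
    case 0 then show ?case using dd_le2[OF w] by simp
  next
    case (Suc k)
    have "dd w (k * R + R) = (\<Sum>y<N. \<bar>\<Sum>x<N. err w (k * R) x * mpow N P R x y\<bar>)"
      unfolding dd_def by (intro sum.cong refl) (simp add: err_add)
    also have "\<dots> \<le> (1 - \<epsilon>) * dd w (k * R)"
      unfolding dd_def
      by (rule contract[where \<rho> = \<pi>]) (use Mb mpow_row err_sum w pi_sum in auto)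
    also have "\<dots> \<le> (1 - \<epsilon>) * ((1 - \<epsilon>) ^ k * 2)" using Suc e1 by (intro mult_left_mono) auto
    finally show ?case by (simp add: add.commute)
  qed
  obtain k where k: "(1 - \<epsilon>) ^ k < 1/4" using real_arch_pow_inv[of "1/4" "1 - \<epsilon>"] epos by auto
  have "dTV N (mpow N P (k * R) w) \<pi> \<le> 1/4" using dk[of k] k by (simp add: dTV_dd)
  then show ?thesis by blast
qed

abbreviation "tstar \<equiv> mixing_rate N P \<pi>"

lemma dd_tstar: assumes x: "x < N" shows "dd x tstar \<le> 1/2"
proof -
  let ?L = "LEAST t. dTV N (mpow N P t x) \<pi> \<le> 1/4"
  have "dTV N (mpow N P ?L x) \<pi> \<le> 1/4" by (rule LeastI_ex) (rule converge[OF x])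
  then have a: "dd x ?L \<le> 1/2" by (simp add: dTV_dd)
  have "?L \<le> tstar" unfolding mixing_rate_def mixing_time_def
    by (rule Max_ge) (use x in auto)
  then show ?thesis using dd_mono[OF x] a by (meson order_trans)
qed

end


lemma block_sum:
  fixes f :: "nat \<Rightarrow> real" and \<tau> :: nat
  assumes nn: "\<And>s. f s \<ge> 0" and le2: "\<And>s. f s \<le> 2" and half: "\<And>s. s \<ge> \<tau> \<Longrightarrow> f s \<le> 1/2"
    and contr: "\<And>s. f (s + \<tau>) \<le> f s / 2"
  shows "(\<Sum>s<T. f s) \<le> 3 * real \<tau>"
proof (cases "\<tau> = 0")
  case True
  then have "f s = 0" for s using contr[of s] nn[of s] by simp
  then show ?thesis by simp
next
  case False
  have B: "(\<Sum>s\<in>{\<tau>..<T}. f s) \<le> real \<tau>" for T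
  proof (induction T rule: less_induct)
    case (less T)
    show ?case
    proof (cases "T \<le> 2 * \<tau>")
      case True
      have "(\<Sum>s\<in>{\<tau>..<T}. f s) \<le> real (card {\<tau>..<T}) * (1/2)"
        by (rule sum_bounded_above) (use half in auto)
      also have "\<dots> \<le> real \<tau> * (1/2)" using True by simp
      finally show ?thesis by simp
    next
      case T: False
      have "(\<Sum>s\<in>{\<tau>..<T}. f s) = (\<Sum>s\<in>{\<tau>..<2*\<tau>}. f s) + (\<Sum>s\<in>{2*\<tau>..<T}. f s)"
        using T by (intro sum.atLeastLessThan_concat[symmetric]) auto
      also have "(\<Sum>s\<in>{\<tau>..<2*\<tau>}. f s) \<le> real (card {\<tau>..<2*\<tau>}) * (1/2)"
        by (rule sum_bounded_above) (use half in auto)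
      also have "(\<Sum>s\<in>{2*\<tau>..<T}. f s) = (\<Sum>s\<in>{\<tau>..<T-\<tau>}. f (s + \<tau>))"
      proof -
        have "{2*\<tau>..<T} = {\<tau>+\<tau>..<(T-\<tau>)+\<tau>}" using T by auto
        then show ?thesis by (simp add: sum.shift_bounds_nat_ivl)
      qed
      also have "\<dots> \<le> (\<Sum>s\<in>{\<tau>..<T-\<tau>}. f s / 2)" by (intro sum_mono contr)
      also have "\<dots> = (\<Sum>s\<in>{\<tau>..<T-\<tau>}. f s) / 2" by (simp add: sum_divide_distrib)
      also have "\<dots> \<le> real \<tau> / 2" using less[of "T - \<tau>"] False T by simp
      finally show ?thesis by simp
    qed
  qed
  let ?m = "max T \<tau>"
  have "(\<Sum>s<T. f s) \<le> (\<Sum>s<?m. f s)" by (rule sum_mono2) (use nn in auto)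
  also have "\<dots> = (\<Sum>s\<in>{0..<\<tau>}. f s) + (\<Sum>s\<in>{\<tau>..<?m}. f s)"
    unfolding lessThan_atLeast0 by (rule sum.atLeastLessThan_concat[symmetric]) auto
  also have "(\<Sum>s\<in>{0..<\<tau>}. f s) \<le> real (card {0..<\<tau>}) * 2"
    by (rule sum_bounded_above) (use le2 in auto)
  also have "(\<Sum>s\<in>{\<tau>..<?m}. f s) \<le> real \<tau>" by (rule B)
  finally show ?thesis by simp
qed

context mc begin

lemma dd_sum: assumes w: "w < N" shows "(\<Sum>s<T. dd w s) \<le> 3 * real tstar"
proof (rule block_sum)
  show "dd w s \<ge> 0" for s by (rule dd_nonneg)
  show "dd w s \<le> 2" for s by (rule dd_le2[OF w])
  show "dd w s \<le> 1/2" if "s \<ge> tstar" for s using dd_mono[OF w that] dd_tstar[OF w] by simp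
  show "dd w (s + tstar) \<le> dd w s / 2" for s
    using dd_submult[OF w, of tstar "1/2" s] dd_tstar by simp
qed

end


lemma Icount_Suc0: "Icount \<sigma> v u 0 (Suc n) = Icount \<sigma> v u 0 n + (if \<sigma> v n = u then 1 else 0)"
proof -
  let ?A = "{j. 0 \<le> j \<and> j < n \<and> \<sigma> v j = u}"
  have fin: "finite ?A" by auto
  show ?thesis
  proof (cases "\<sigma> v n = u")
    case True
    then have "{j. 0 \<le> j \<and> j < Suc n \<and> \<sigma> v j = u} = insert n ?A" by auto
    then show ?thesis using fin True unfolding Icount_def by simp
  next
    case False
    then have "{j. 0 \<le> j \<and> j < Suc n \<and> \<sigma> v j = u} = ?A"
      by (auto simp: less_Suc_eq)
    then show ?thesis using False unfolding Icount_def by simp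
  qed
qed

lemma Icount_split: "z \<le> z' \<Longrightarrow> Icount \<sigma> v u 0 z' = Icount \<sigma> v u 0 z + Icount \<sigma> v u z z'"
proof -
  assume zz: "z \<le> z'"
  have "{j. 0 \<le> j \<and> j < z' \<and> \<sigma> v j = u} = {j. 0 \<le> j \<and> j < z \<and> \<sigma> v j = u} \<union> {j. z \<le> j \<and> j < z' \<and> \<sigma> v j = u}"
    using zz by auto
  moreover have "card ({j. 0 \<le> j \<and> j < z \<and> \<sigma> v j = u} \<union> {j. z \<le> j \<and> j < z' \<and> \<sigma> v j = u})
     = card {j. 0 \<le> j \<and> j < z \<and> \<sigma> v j = u} + card {j. z \<le> j \<and> j < z' \<and> \<sigma> v j = u}"
    by (rule card_Un_disjoint) auto
  ultimately show ?thesis unfolding Icount_def by simp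
qed

lemma Icount_nonnbr: "functional_router N P \<sigma> \<Longrightarrow> v < N \<Longrightarrow> u \<notin> nbrs N P v \<Longrightarrow> Icount \<sigma> v u z z' = 0"
  unfolding Icount_def functional_router_def by auto

lemma Icount_sum0: "functional_router N P \<sigma> \<Longrightarrow> v < N \<Longrightarrow> (\<Sum>u<N. Icount \<sigma> v u 0 n) = n"
proof (induction n)
  case 0 then show ?case by (simp add: Icount_def)
next
  case (Suc n)
  have lt: "\<sigma> v n < N" using Suc.prems unfolding functional_router_def nbrs_def by blast
  have "(\<Sum>u<N. Icount \<sigma> v u 0 (Suc n)) = (\<Sum>u<N. Icount \<sigma> v u 0 n) + (\<Sum>u<N. if \<sigma> v n = u then 1 else 0)"
    by (simp add: Icount_Suc0 sum.distrib)
  also have "(\<Sum>u<N. if \<sigma> v n = u then 1 else (0::nat)) = 1" using lt by (subst sum.delta') auto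
  finally show ?case using Suc by simp
qed

lemma Icount_sum: "functional_router N P \<sigma> \<Longrightarrow> v < N \<Longrightarrow> z \<le> z' \<Longrightarrow> (\<Sum>u<N. Icount \<sigma> v u z z') = z' - z"
proof -
  assume a: "functional_router N P \<sigma>" "v < N" "z \<le> z'"
  have "(\<Sum>u<N. Icount \<sigma> v u 0 z') = (\<Sum>u<N. Icount \<sigma> v u 0 z) + (\<Sum>u<N. Icount \<sigma> v u z z')"
    using a(3) by (simp add: Icount_split sum.distrib)
  then show ?thesis using Icount_sum0[OF a(1,2)] by simp
qed

locale bil =
  fixes N :: nat and P :: "nat \<Rightarrow> nat \<Rightarrow> real" and \<sigma> :: "nat \<Rightarrow> nat \<Rightarrow> nat" and v :: nat
  assumes v: "v < N" and br: "billiard_router N P \<sigma>"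
    and Pnn: "\<And>u. u < N \<Longrightarrow> P v u \<ge> 0" and Prow: "(\<Sum>u<N. P v u) = 1"
begin

abbreviation "nb \<equiv> nbrs N P v"

lemma fr: "functional_router N P \<sigma>" using br unfolding billiard_router_def by blast

lemma sig_nb: "\<sigma> v n \<in> nb" using fr v unfolding functional_router_def by blast

lemma nb_pos: "u \<in> nb \<Longrightarrow> P v u > 0" unfolding nbrs_def by auto

lemma nb_sub: "nb \<subseteq> {..<N}" unfolding nbrs_def by auto

lemma fin_nb: "finite nb" using nb_sub finite_subset by blast

lemma greedy: "u \<in> nb \<Longrightarrow>
  (real (Icount \<sigma> v (\<sigma> v n) 0 n) + 1) / P v (\<sigma> v n) \<le> (real (Icount \<sigma> v u 0 n) + 1) / P v u"
  using br v unfolding billiard_router_def by blast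

definition x :: "nat \<Rightarrow> nat \<Rightarrow> real" where "x u n = real (Icount \<sigma> v u 0 n)"

definition K :: "nat \<Rightarrow> real" where "K n = (x (\<sigma> v n) n + 1) / P v (\<sigma> v n)"

definition L :: "nat \<Rightarrow> real" where "L n = (case n of 0 \<Rightarrow> 0 | Suc m \<Rightarrow> K m)"

lemma x_Suc: "x u (Suc n) = x u n + (if \<sigma> v n = u then 1 else 0)"
  unfolding x_def by (simp add: Icount_Suc0)

lemma K_le: "u \<in> nb \<Longrightarrow> K n \<le> (x u n + 1) / P v u"
  unfolding K_def x_def by (rule greedy)

lemma x_nonneg: "x u n \<ge> 0" unfolding x_def by simp

lemma K_mono: "K m \<le> K (Suc m)"
proof (cases "\<sigma> v (Suc m) = \<sigma> v m")
  case True
  let ?a = "\<sigma> v m"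
  have pa: "P v ?a > 0" using nb_pos sig_nb by blast
  have "K (Suc m) = (x ?a m + 2) / P v ?a" unfolding K_def using True by (simp add: x_Suc)
  moreover have "K m = (x ?a m + 1) / P v ?a" unfolding K_def by simp
  ultimately show ?thesis using pa by (simp add: divide_right_mono)
next
  case False
  let ?b = "\<sigma> v (Suc m)"
  have "K (Suc m) = (x ?b m + 1) / P v ?b" unfolding K_def using False by (simp add: x_Suc)
  then show ?thesis using K_le[OF sig_nb[of "Suc m"]] by simp
qed

lemma K_nonneg: "K n \<ge> 0"
  unfolding K_def using nb_pos[OF sig_nb[of n]] x_nonneg by simp

lemma L_mono: "L n \<le> L (Suc n)"
  by (cases n) (auto simp: L_def K_nonneg K_mono)

lemma x_upper: "u \<in> nb \<Longrightarrow> x u n \<le> L n * P v u"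
proof (induction n)
  case 0 then show ?case by (simp add: x_def Icount_def L_def)
next
  case (Suc n)
  have pu: "P v u > 0" using nb_pos Suc.prems by blast
  show ?case
  proof (cases "\<sigma> v n = u")
    case True
    have "L (Suc n) * P v u = x u n + 1" using True pu unfolding L_def K_def by simp
    then show ?thesis using True by (simp add: x_Suc)
  next
    case False
    have "L n * P v u \<le> L (Suc n) * P v u" using L_mono pu by (intro mult_right_mono) auto
    then show ?thesis using False Suc by (simp add: x_Suc)
  qed
qed

lemma x_lower: "u \<in> nb \<Longrightarrow> L n * P v u \<le> x u n + 1"
proof (cases n)
  case 0 then show ?thesis by (simp add: L_def x_nonneg)
next
  case (Suc m)
  assume u: "u \<in> nb"
  have pu: "P v u > 0" using nb_pos u by blast
  have "K m \<le> (x u m + 1) / P v u" by (rule K_le[OF u])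
  then have "K m * P v u \<le> x u m + 1" using pu by (simp add: pos_le_divide_eq)
  moreover have "x u m \<le> x u (Suc m)" by (simp add: x_Suc)
  moreover have "L n * P v u = K m * P v u" using Suc by (simp add: L_def)
  moreover have "x u n = x u (Suc m)" using Suc by simp
  ultimately show ?thesis by linarith
qed

lemma sum_nb: "(\<Sum>u<N. f u) = (\<Sum>u\<in>nb. f u)" if "\<And>u. u < N \<Longrightarrow> u \<notin> nb \<Longrightarrow> f u = 0"
  by (rule sum.mono_neutral_right) (use that nb_sub in auto)

lemma P_off: "u < N \<Longrightarrow> u \<notin> nb \<Longrightarrow> P v u = 0"
  using Pnn unfolding nbrs_def by force

lemma Psum_nb: "(\<Sum>u\<in>nb. P v u) = 1"
  using Prow sum_nb[of "\<lambda>u. P v u"] P_off by simp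

lemma discrepancy:
  assumes u: "u \<in> nb" and zz: "z \<le> z'"
  shows "\<bar>real (Icount \<sigma> v u z z') - real (z' - z) * P v u\<bar> \<le> real (deg N P v) - 1"
proof -
  define a where "a w = (x w z' - L z' * P v w) - (x w z - L z * P v w)" for w
  have a1: "\<bar>a w\<bar> \<le> 1" if "w \<in> nb" for w
    using x_upper[OF that, of z] x_upper[OF that, of z'] x_lower[OF that, of z] x_lower[OF that, of z']
    unfolding a_def abs_le_iff by linarith
  have I: "real (Icount \<sigma> v w z z') = (L z' - L z) * P v w + a w" for w
    using Icount_split[OF zz, of \<sigma> v w] unfolding a_def x_def by (simp add: algebra_simps)
  have "real (z' - z) = (\<Sum>w<N. real (Icount \<sigma> v w z z'))"
    using Icount_sum[OF fr v zz] by (metis of_nat_sum)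
  also have "\<dots> = (\<Sum>w\<in>nb. real (Icount \<sigma> v w z z'))"
    by (rule sum_nb) (simp add: Icount_nonnbr[OF fr v])
  also have "\<dots> = (L z' - L z) * (\<Sum>w\<in>nb. P v w) + (\<Sum>w\<in>nb. a w)"
    by (simp add: I sum.distrib sum_distrib_left)
  finally have zsum: "real (z' - z) = (L z' - L z) + (\<Sum>w\<in>nb. a w)" by (simp add: Psum_nb)
  have sa: "(\<Sum>w\<in>nb. a w) = a u + (\<Sum>w\<in>nb - {u}. a w)"
    using u fin_nb by (simp add: sum.remove)
  have "real (Icount \<sigma> v u z z') - real (z' - z) * P v u
      = a u * (1 - P v u) - P v u * (\<Sum>w\<in>nb - {u}. a w)"
    unfolding I zsum sa by (simp add: algebra_simps)
  moreover have pu: "0 < P v u" "P v u \<le> 1"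
  proof -
    show "0 < P v u" by (rule nb_pos[OF u])
    have "P v u \<le> (\<Sum>w\<in>nb. P v w)"
      by (rule member_le_sum) (use u fin_nb nb_pos in \<open>auto intro: less_imp_le\<close>)
    then show "P v u \<le> 1" using Psum_nb by simp
  qed
  moreover have "\<bar>\<Sum>w\<in>nb - {u}. a w\<bar> \<le> real (deg N P v) - 1"
  proof -
    have "\<bar>\<Sum>w\<in>nb - {u}. a w\<bar> \<le> (\<Sum>w\<in>nb - {u}. \<bar>a w\<bar>)" by (rule sum_abs)
    also have "\<dots> \<le> (\<Sum>w\<in>nb - {u}. 1)" using a1 by (intro sum_mono) auto
    also have "\<dots> = real (deg N P v) - 1"
    proof -
      have "0 < card nb" using fin_nb u card_gt_0_iff by blast
      then have c: "card nb \<ge> 1" by simp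
      show ?thesis using c u fin_nb unfolding deg_def by (simp add: card_Diff_singleton of_nat_diff)
    qed
    finally show ?thesis .
  qed
  moreover have "\<bar>a u\<bar> \<le> 1" by (rule a1[OF u])
  ultimately have bnd: "\<bar>real (Icount \<sigma> v u z z') - real (z' - z) * P v u\<bar>
      \<le> (1 - P v u) + P v u * (real (deg N P v) - 1)"
  proof -
    assume e: "real (Icount \<sigma> v u z z') - real (z' - z) * P v u
      = a u * (1 - P v u) - P v u * (\<Sum>w\<in>nb - {u}. a w)"
      and p: "0 < P v u" "P v u \<le> 1"
      and s: "\<bar>\<Sum>w\<in>nb - {u}. a w\<bar> \<le> real (deg N P v) - 1" and au: "\<bar>a u\<bar> \<le> 1"
    have "\<bar>a u * (1 - P v u)\<bar> \<le> 1 - P v u" using au p by (simp add: abs_mult mult_left_le_one_le)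
    moreover have "\<bar>P v u * (\<Sum>w\<in>nb - {u}. a w)\<bar> \<le> P v u * (real (deg N P v) - 1)"
      using s p by (simp add: abs_mult mult_left_mono)
    ultimately show ?thesis unfolding e by (smt (verit) abs_triangle_ineq4)
  qed
  have "0 < card nb" using fin_nb u card_gt_0_iff by blast
  then have dpos: "deg N P v \<ge> 1" unfolding deg_def by simp
  show ?thesis
  proof (cases "deg N P v = 1")
    case True
    then obtain w where "nb = {w}" unfolding deg_def using card_1_singletonE by blast
    then have "nb = {u}" using u by simp
    then have "P v u = 1" using Psum_nb by simp
    then show ?thesis using bnd True by simp
  next
    case False
    then have "real (deg N P v) - 2 \<ge> 0" using dpos by simp
    then have "P v u * (real (deg N P v) - 2) \<le> 1 * (real (deg N P v) - 2)"
      using pu by (intro mult_right_mono) auto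
    then show ?thesis using bnd by (simp add: algebra_simps)
  qed
qed

end


lemma swap_mult: "(\<Sum>v\<in>A. (\<Sum>i\<in>B. f i v) * (c v::real)) = (\<Sum>i\<in>B. \<Sum>v\<in>A. f i v * c v)"
  by (simp add: sum_distrib_right) (rule sum.swap)

definition Sst :: "nat \<Rightarrow> (nat \<Rightarrow> nat \<Rightarrow> nat) \<Rightarrow> (nat \<Rightarrow> nat) \<Rightarrow> nat \<Rightarrow> nat \<Rightarrow> nat" where
  "Sst N \<sigma> \<chi>0 t = snd (router_state N \<sigma> \<chi>0 t)"

lemma chi_0: "chi N \<sigma> \<chi>0 0 = \<chi>0" by (simp add: chi_def)

lemma chi_Suc: "chi N \<sigma> \<chi>0 (Suc t) u =
   (\<Sum>v<N. Icount \<sigma> v u (Sst N \<sigma> \<chi>0 t v) (Sst N \<sigma> \<chi>0 t v + chi N \<sigma> \<chi>0 t v))"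
  by (simp add: chi_def Sst_def Let_def)

locale mcb = mc +
  fixes \<sigma> :: "nat \<Rightarrow> nat \<Rightarrow> nat" and \<chi>0 :: "nat \<Rightarrow> nat"
  assumes br: "billiard_router N P \<sigma>"
begin

abbreviation "c \<equiv> chi N \<sigma> \<chi>0"

definition Z :: "nat \<Rightarrow> nat \<Rightarrow> nat \<Rightarrow> nat" where
  "Z t v u = Icount \<sigma> v u (Sst N \<sigma> \<chi>0 t v) (Sst N \<sigma> \<chi>0 t v + c t v)"

definition D :: "nat \<Rightarrow> nat \<Rightarrow> nat \<Rightarrow> real" where
  "D t v u = real (Z t v u) - real (c t v) * P v u"

definition R :: "nat \<Rightarrow> nat \<Rightarrow> real" where
  "R T w = (\<Sum>t<T. \<Sum>v<N. \<Sum>u<N. D t v u * mpow N P (T - Suc t) u w)"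

lemma c_Suc: "real (c (Suc t) w) = (\<Sum>v<N. real (c t v) * P v w) + (\<Sum>v<N. D t v w)"
  by (simp add: chi_Suc D_def Z_def sum_subtractf)

lemma mu_Suc: "mu N P \<chi>0 (Suc T) w = (\<Sum>x<N. mu N P \<chi>0 T x * P x w)"
proof -
  have "(\<Sum>x<N. mu N P \<chi>0 T x * P x w) = (\<Sum>v<N. \<Sum>x<N. real (\<chi>0 v) * mpow N P T v x * P x w)"
    unfolding mu_def by (rule swap_mult)
  also have "\<dots> = mu N P \<chi>0 (Suc T) w"
    unfolding mu_def by (simp add: sum_distrib_left mult.assoc)
  finally show ?thesis by simp
qed

lemma R_Suc: "w < N \<Longrightarrow> R (Suc T) w = (\<Sum>x<N. R T x * P x w) + (\<Sum>v<N. D T v w)"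
proof -
  assume w: "w < N"
  have "(\<Sum>x<N. R T x * P x w) = (\<Sum>t<T. \<Sum>v<N. \<Sum>u<N. \<Sum>x<N. D t v u * mpow N P (T - Suc t) u x * P x w)"
    unfolding R_def by (simp only: swap_mult)
  also have "\<dots> = (\<Sum>t<T. \<Sum>v<N. \<Sum>u<N. D t v u * mpow N P (Suc T - Suc t) u w)"
  proof (intro sum.cong refl)
    fix t v u assume t: "t \<in> {..<T}"
    have "(\<Sum>x<N. D t v u * mpow N P (T - Suc t) u x * P x w) = D t v u * mpow N P (Suc (T - Suc t)) u w"
      by (simp add: sum_distrib_left mult.assoc)
    also have "Suc (T - Suc t) = Suc T - Suc t" using t by simp
    finally show "(\<Sum>x<N. D t v u * mpow N P (T - Suc t) u x * P x w) = D t v u * mpow N P (Suc T - Suc t) u w" .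
  qed
  moreover have "(\<Sum>v<N. D T v w) = (\<Sum>v<N. \<Sum>u<N. D T v u * mpow N P (Suc T - Suc T) u w)"
    using w by (simp add: delta_sum2)
  ultimately show ?thesis unfolding R_def by simp
qed

lemma chi_eq: "w < N \<Longrightarrow> real (c T w) = mu N P \<chi>0 T w + R T w"
proof (induction T arbitrary: w)
  case 0 then show ?case by (simp add: chi_0 mu_def R_def delta_sum2)
next
  case (Suc T)
  have "real (c (Suc T) w) = (\<Sum>v<N. (mu N P \<chi>0 T v + R T v) * P v w) + (\<Sum>v<N. D T v w)"
    unfolding c_Suc using Suc.IH by simp
  also have "\<dots> = mu N P \<chi>0 (Suc T) w + R (Suc T) w"
    by (simp add: mu_Suc R_Suc Suc.prems distrib_right sum.distrib)
  finally show ?case .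
qed

end


lemma abs_sum3: "\<bar>\<Sum>i\<in>A. \<Sum>j\<in>B. \<Sum>k\<in>C. (f i j k::real)\<bar> \<le> (\<Sum>i\<in>A. \<Sum>j\<in>B. \<Sum>k\<in>C. \<bar>f i j k\<bar>)"
proof -
  have "\<bar>\<Sum>i\<in>A. \<Sum>j\<in>B. \<Sum>k\<in>C. f i j k\<bar> \<le> (\<Sum>i\<in>A. \<bar>\<Sum>j\<in>B. \<Sum>k\<in>C. f i j k\<bar>)" by (rule sum_abs)
  also have "\<dots> \<le> (\<Sum>i\<in>A. \<Sum>j\<in>B. \<bar>\<Sum>k\<in>C. f i j k\<bar>)" by (intro sum_mono sum_abs)
  also have "\<dots> \<le> (\<Sum>i\<in>A. \<Sum>j\<in>B. \<Sum>k\<in>C. \<bar>f i j k\<bar>)" by (intro sum_mono sum_abs)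
  finally show ?thesis .
qed

context mcb begin

lemma fr: "functional_router N P \<sigma>" using br unfolding billiard_router_def by blast

lemma D_sum0: "v < N \<Longrightarrow> (\<Sum>u<N. D t v u) = 0"
proof -
  assume v: "v < N"
  have "(\<Sum>u<N. Z t v u) = c t v" unfolding Z_def by (simp add: Icount_sum[OF fr v])
  then have "(\<Sum>u<N. real (Z t v u)) = real (c t v)" by (metis of_nat_sum)
  then show ?thesis unfolding D_def
    by (simp add: sum_subtractf sum_distrib_left[symmetric] P_row v)
qed

lemma diff_eq: "w < N \<Longrightarrow> real (c T w) - mu N P \<chi>0 T w
   = (\<Sum>t<T. \<Sum>v<N. \<Sum>u<N. D t v u * (mpow N P (T - Suc t) u w - \<pi> w))"
proof -
  assume w: "w < N"
  have z: "(\<Sum>u<N. D t v u * \<pi> w) = 0" if "v < N" for t v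
    using D_sum0[OF that] by (simp add: sum_distrib_right[symmetric])
  have "(\<Sum>t<T. \<Sum>v<N. \<Sum>u<N. D t v u * (mpow N P (T - Suc t) u w - \<pi> w)) = R T w"
    unfolding R_def by (simp add: right_diff_distrib sum_subtractf z)
  then show ?thesis using chi_eq[OF w] by simp
qed

lemma deg_le: "u < N \<Longrightarrow> deg N P u \<le> max_deg N P"
  unfolding max_deg_def by (rule Max_ge) auto

lemma ex_nbr: "w < N \<Longrightarrow> \<exists>y<N. P w y > 0"
proof (rule ccontr)
  assume w: "w < N" and "\<not> (\<exists>y<N. P w y > 0)"
  then have "(\<Sum>y<N. P w y) \<le> 0" by (intro sum_nonpos) auto
  then show False using P_row w by simp
qed

lemma Delta_ge1: "w < N \<Longrightarrow> real (max_deg N P) - 1 \<ge> 0"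
proof -
  assume w: "w < N"
  obtain y where y: "y < N" "P w y > 0" using ex_nbr[OF w] by blast
  have "nbrs N P w \<noteq> {}" using y unfolding nbrs_def by auto
  moreover have "finite (nbrs N P w)" unfolding nbrs_def by auto
  ultimately have "0 < deg N P w" unfolding deg_def using card_gt_0_iff by blast
  then show ?thesis using deg_le[OF w] by simp
qed

lemma D_bound: assumes v: "v < N" and u: "u < N"
  shows "\<bar>D t v u\<bar> \<le> (if P v u > 0 then real (max_deg N P) - 1 else 0)"
proof -
  interpret b: bil N P \<sigma> v
    by unfold_locales (use v br P_nonneg P_row in auto)
  show ?thesis
  proof (cases "P v u > 0")
    case True
    then have un: "u \<in> nbrs N P v" unfolding nbrs_def using u by auto
    have "\<bar>D t v u\<bar> \<le> real (deg N P v) - 1"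
      using b.discrepancy[OF un, of "Sst N \<sigma> \<chi>0 t v" "Sst N \<sigma> \<chi>0 t v + c t v"]
      unfolding D_def Z_def by simp
    then show ?thesis using True deg_le[OF v] by simp
  next
    case False
    then have un: "u \<notin> nbrs N P v" unfolding nbrs_def by auto
    have "P v u = 0" using False P_nonneg[OF v u] by simp
    then show ?thesis using Icount_nonnbr[OF fr v un] False unfolding D_def Z_def by simp
  qed
qed

lemma in_count: assumes u: "u < N" shows "card {v \<in> {..<N}. P v u > 0} \<le> max_deg N P"
proof -
  have "{v \<in> {..<N}. P v u > 0} = nbrs N P u"
  proof (intro set_eqI iffI)
    fix v assume "v \<in> {v \<in> {..<N}. P v u > 0}"
    then have v: "v < N" "P v u > 0" by auto
    have "\<pi> v * P v u > 0" using pi_pos[OF v(1)] v by simp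
    then have "\<pi> u * P u v > 0" using P_rev[OF v(1) u] by simp
    then have "P u v > 0" using pi_pos[OF u] by (simp add: zero_less_mult_iff)
    then show "v \<in> nbrs N P u" using v unfolding nbrs_def by auto
  next
    fix v assume "v \<in> nbrs N P u"
    then have v: "v < N" "P u v > 0" unfolding nbrs_def by auto
    have "\<pi> u * P u v > 0" using pi_pos[OF u] v by simp
    then have "\<pi> v * P v u > 0" using P_rev[OF u v(1)] by simp
    then have "P v u > 0" using pi_pos[OF v(1)] by (simp add: zero_less_mult_iff)
    then show "v \<in> {v \<in> {..<N}. P v u > 0}" using v by auto
  qed
  then show ?thesis using deg_le[OF u] unfolding deg_def by simp
qed

lemma col_bound: assumes w: "w < N"
  shows "(\<Sum>u<N. \<bar>mpow N P s u w - \<pi> w\<bar>) \<le> \<pi> w / pi_min N \<pi> * dd w s"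
proof -
  have pm: "pi_min N \<pi> > 0" using pi_min_pos w by simp
  have "\<bar>mpow N P s u w - \<pi> w\<bar> \<le> \<pi> w / pi_min N \<pi> * \<bar>err w s u\<bar>" if u: "u < N" for u
  proof -
    have pu: "\<pi> u > 0" by (rule pi_pos[OF u])
    have "mpow N P s u w = \<pi> w * mpow N P s w u / \<pi> u"
      using mpow_rev[OF u w, of s] pu by (simp add: field_simps)
    then have "mpow N P s u w - \<pi> w = \<pi> w / \<pi> u * err w s u"
      unfolding err_def using pu by (simp add: field_simps)
    then have "\<bar>mpow N P s u w - \<pi> w\<bar> = \<pi> w / \<pi> u * \<bar>err w s u\<bar>"
      using pu pi_nonneg[OF w] by (simp add: abs_mult)
    also have "\<dots> \<le> \<pi> w / pi_min N \<pi> * \<bar>err w s u\<bar>"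
      using pi_min_le[OF u] pm pi_nonneg[OF w]
      by (intro mult_right_mono divide_left_mono) auto
    finally show ?thesis .
  qed
  then have "(\<Sum>u<N. \<bar>mpow N P s u w - \<pi> w\<bar>) \<le> (\<Sum>u<N. \<pi> w / pi_min N \<pi> * \<bar>err w s u\<bar>)"
    by (intro sum_mono) auto
  also have "\<dots> = \<pi> w / pi_min N \<pi> * dd w s" unfolding dd_def by (simp add: sum_distrib_left)
  finally show ?thesis .
qed

end


context mcb begin

lemma main_bound: assumes w: "w < N"
  shows "\<bar>real (c T w) - mu N P \<chi>0 T w\<bar>
    \<le> 3 * \<pi> w / pi_min N \<pi> * real tstar * real (max_deg N P) * (real (max_deg N P) - 1)"
proof -
  define \<Delta> where "\<Delta> = real (max_deg N P)"
  define e where "e t u = \<bar>mpow N P (T - Suc t) u w - \<pi> w\<bar>" for t u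
  define q where "q = \<pi> w / pi_min N \<pi>"
  have d1: "\<Delta> - 1 \<ge> 0" unfolding \<Delta>_def by (rule Delta_ge1[OF w])
  have q0: "q \<ge> 0" unfolding q_def using pi_nonneg[OF w] pi_min_pos w by simp
  have e0: "e t u \<ge> 0" for t u unfolding e_def by simp
  have "\<bar>real (c T w) - mu N P \<chi>0 T w\<bar>
      \<le> (\<Sum>t<T. \<Sum>v<N. \<Sum>u<N. \<bar>D t v u * (mpow N P (T - Suc t) u w - \<pi> w)\<bar>)"
    unfolding diff_eq[OF w] by (rule abs_sum3)
  also have "\<dots> \<le> (\<Sum>t<T. \<Sum>v<N. \<Sum>u<N. (if P v u > 0 then \<Delta> - 1 else 0) * e t u)"
    unfolding e_def \<Delta>_def abs_mult
    by (intro sum_mono mult_right_mono D_bound) auto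
  also have "\<dots> = (\<Sum>t<T. \<Sum>u<N. (\<Sum>v<N. (if P v u > 0 then \<Delta> - 1 else 0)) * e t u)"
    by (rule sum.cong[OF refl]) (simp add: sum_distrib_right, rule sum.swap)
  also have "\<dots> \<le> (\<Sum>t<T. \<Sum>u<N. ((\<Delta> - 1) * \<Delta>) * e t u)"
  proof (intro sum_mono mult_right_mono e0)
    fix t u assume u: "u \<in> {..<N}"
    have "(\<Sum>v<N. (if P v u > 0 then \<Delta> - 1 else 0)) = (\<Sum>v\<in>{v \<in> {..<N}. P v u > 0}. \<Delta> - 1)"
      by (subst sum.inter_filter) simp_all
    also have "\<dots> = real (card {v \<in> {..<N}. P v u > 0}) * (\<Delta> - 1)" by simp
    also have "\<dots> \<le> \<Delta> * (\<Delta> - 1)"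
      using in_count[of u] u d1 unfolding \<Delta>_def by (intro mult_right_mono) auto
    finally show "(\<Sum>v<N. (if P v u > 0 then \<Delta> - 1 else 0)) \<le> (\<Delta> - 1) * \<Delta>" by (simp add: mult.commute)
  qed
  also have "\<dots> = ((\<Delta> - 1) * \<Delta>) * (\<Sum>t<T. \<Sum>u<N. e t u)" by (simp add: sum_distrib_left)
  also have "\<dots> \<le> ((\<Delta> - 1) * \<Delta>) * (\<Sum>t<T. q * dd w (T - Suc t))"
    using d1 unfolding e_def q_def \<Delta>_def
    by (intro mult_left_mono sum_mono col_bound[OF w]) auto
  also have "(\<Sum>t<T. q * dd w (T - Suc t)) = q * (\<Sum>s<T. dd w s)"
    by (simp add: sum_distrib_left[symmetric] sum.nat_diff_reindex)
  also have "((\<Delta> - 1) * \<Delta>) * (q * (\<Sum>s<T. dd w s)) \<le> ((\<Delta> - 1) * \<Delta>) * (q * (3 * real tstar))"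
    using d1 q0 dd_sum[OF w] \<Delta>_def by (intro mult_left_mono) auto
  finally show ?thesis unfolding q_def \<Delta>_def by (simp add: algebra_simps)
qed

end

theorem theorem5p3:
  fixes N :: nat and P :: "nat \<Rightarrow> nat \<Rightarrow> real" and \<pi> :: "nat \<Rightarrow> real"
    and \<sigma> :: "nat \<Rightarrow> nat \<Rightarrow> nat" and \<chi>0 :: "nat \<Rightarrow> nat"
  assumes "ergodic_chain N P"
    and "stationary_dist N P \<pi>"
    and "reversible_chain N P \<pi>"
    and "billiard_router N P \<sigma>"
  shows "\<forall>w<N. \<forall>T. \<bar>real (chi N \<sigma> \<chi>0 T w) - mu N P \<chi>0 T w\<bar>
           \<le> 3 * \<pi> w / pi_min N \<pi> * real (mixing_rate N P \<pi>)
               * real (max_deg N P) * (real (max_deg N P) - 1)"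
proof -
  interpret mcb N P \<pi> \<sigma> \<chi>0
    by unfold_locales (use assms in auto)
  show ?thesis using main_bound by blast
qed


end
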